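(* For every $0<\alpha<1$, the Marcinkiewicz space $M_\alpha$ of measurable functions $f$ on $(0,\infty)$ with $\|f\|_{M_\alpha}=\sup_{t>0}t^{\alpha-1}\int_0^t f^*(u)\,du<\infty$ does not belong to the class $\mathcal X$.
   Context: $f^*$ denotes the nonincreasing rearrangement. A pair $(f,g)$ satisfies the NP condition if there is $t_0>0$ with $f^*(t)\ge g^*(t)$ for $t\le t_0$ and $f^*(t)\le g^*(t)$ for $t\ge t_0$. $\mathcal X$ is the class of all rearrangement invariant spaces $X$ on $(0,\infty)$ such that for every pair $(f,g)$ with $f,g\in X$ satisfying the NP condition and $\|f\|_X\ge\|g\|_X$, one has $\|f^*\chi_{(0,s)}\|_X\ge\|g^*\chi_{(0,s)}\|_X$ for all $s>0$. *)

theory Defs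
  imports "HOL-Analysis.Analysis"
begin

text \<open>Functions on (0,\<infinity>) are represented as functions real \<Rightarrow> real whose values
  on (-\<infinity>,0] are ignored; the underlying measure is Lebesgue measure on (0,\<infinity>).\<close>

definition distrib_fun :: "(real \<Rightarrow> real) \<Rightarrow> ennreal \<Rightarrow> ennreal" where
  "distrib_fun f s = emeasure lborel {x::real. 0 < x \<and> s < ennreal \<bar>f x\<bar>}"

definition rearr :: "(real \<Rightarrow> real) \<Rightarrow> real \<Rightarrow> ennreal" where
  "rearr f t = Inf {s::ennreal. distrib_fun f s \<le> ennreal t}"

definition marc_norm :: "real \<Rightarrow> (real \<Rightarrow> real) \<Rightarrow> ennreal" where
  "marc_norm \<alpha> f = (SUP t\<in>{0<..}. ennreal (t powr (\<alpha> - 1)) *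
      (\<integral>\<^sup>+ u\<in>{0<..<t}. rearr f u \<partial>lborel))"

definition marc_space :: "real \<Rightarrow> (real \<Rightarrow> real) set" where
  "marc_space \<alpha> = {f. f \<in> borel_measurable lborel \<and> marc_norm \<alpha> f < \<infinity>}"

definition NP_cond :: "(real \<Rightarrow> real) \<Rightarrow> (real \<Rightarrow> real) \<Rightarrow> bool" where
  "NP_cond f g \<longleftrightarrow> (\<exists>t0>0. (\<forall>t. 0 < t \<and> t \<le> t0 \<longrightarrow> rearr g t \<le> rearr f t)
                          \<and> (\<forall>t. t0 \<le> t \<longrightarrow> rearr f t \<le> rearr g t))"

definition rearr_cut :: "(real \<Rightarrow> real) \<Rightarrow> real \<Rightarrow> real \<Rightarrow> real" where
  "rearr_cut f s = (\<lambda>t. if 0 < t \<and> t < s then enn2real (rearr f t) else 0)"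

definition classX_prop :: "(real \<Rightarrow> real) set \<Rightarrow> ((real \<Rightarrow> real) \<Rightarrow> ennreal) \<Rightarrow> bool" where
  "classX_prop X nrm \<longleftrightarrow>
     (\<forall>f g. f \<in> X \<and> g \<in> X \<and> NP_cond f g \<and> nrm g \<le> nrm f \<longrightarrow>
        (\<forall>s>0. nrm (rearr_cut g s) \<le> nrm (rearr_cut f s)))"

end

theory Submission
  imports Defs
begin

lemma rearr_mono_fun:
  fixes h :: "real \<Rightarrow> real"
  assumes meas: "h \<in> borel_measurable borel"
    and mono: "\<And>x y. 0 < x \<Longrightarrow> x \<le> y \<Longrightarrow> h y \<le> h x"
    and nn: "\<And>x. 0 < x \<Longrightarrow> 0 \<le> h x"
    and t: "0 < t"
    and rc: "\<And>s. s < h t \<Longrightarrow> \<exists>x>t. s < h x"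
  shows "rearr h t = ennreal (h t)"
  unfolding rearr_def
proof (rule antisym)
  have "distrib_fun h (ennreal (h t)) \<le> ennreal t"
  proof -
    have "{x::real. 0 < x \<and> ennreal (h t) < ennreal \<bar>h x\<bar>} \<subseteq> {0<..t}"
    proof
      fix x assume x: "x \<in> {x::real. 0 < x \<and> ennreal (h t) < ennreal \<bar>h x\<bar>}"
      show "x \<in> {0<..t}"
      proof (rule ccontr)
        assume "x \<notin> {0<..t}"
        with x have "t \<le> x" by auto
        hence "h x \<le> h t" using mono t by auto
        with nn[of x] x show False
          by (auto simp: ennreal_less_iff)
      qed
    qed
    hence "distrib_fun h (ennreal (h t)) \<le> emeasure lborel {0<..t}"
      unfolding distrib_fun_def by (intro emeasure_mono) auto
    thus ?thesis using t by simp
  qed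
  thus "Inf {s. distrib_fun h s \<le> ennreal t} \<le> ennreal (h t)"
    by (intro Inf_lower) simp
next
  show "ennreal (h t) \<le> Inf {s. distrib_fun h s \<le> ennreal t}"
  proof (rule Inf_greatest)
    fix s assume s: "s \<in> {s. distrib_fun h s \<le> ennreal t}"
    show "ennreal (h t) \<le> s"
    proof (rule ccontr)
      assume "\<not> ennreal (h t) \<le> s"
      hence lt: "s < ennreal (h t)" by simp
      then obtain r where r: "s = ennreal r" "0 \<le> r" "r < h t"
        by (metis ennreal_cases ennreal_less_iff ennreal_less_top order.strict_trans top.not_eq_extremum
            ennreal_less_zero_iff not_le ennreal_eq_0_iff nn t less_imp_le)
      obtain x where x: "x > t" "r < h x" using rc r by auto
      have "{0<..x} \<subseteq> {y::real. 0 < y \<and> s < ennreal \<bar>h y\<bar>}"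
      proof
        fix y assume y: "y \<in> {0<..x}"
        hence "h x \<le> h y" using mono by auto
        hence "r < \<bar>h y\<bar>" using x by auto
        thus "y \<in> {y::real. 0 < y \<and> s < ennreal \<bar>h y\<bar>}" using y r
          by (auto simp: ennreal_less_iff)
      qed
      moreover have "{y::real. 0 < y \<and> s < ennreal \<bar>h y\<bar>} \<in> sets lborel"
        using meas by measurable
      ultimately have "emeasure lborel {0<..x} \<le> distrib_fun h s"
        unfolding distrib_fun_def by (intro emeasure_mono)
      also have "\<dots> \<le> ennreal t" using s by simp
      finally show False using x t by (simp add: ennreal_le_iff)
    qed
  qed
qed


lemma piece_const:
  fixes h :: "real \<Rightarrow> real"
  assumes "a \<le> b" "\<And>x. x \<in> {a<..<b} \<Longrightarrow> h x = c"
  shows "(h has_integral c * (b - a)) {a..b}"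
proof -
  have "(h has_integral ((\<lambda>u. c * u) b - (\<lambda>u. c * u) a)) {a..b}"
  proof (rule fundamental_theorem_of_calculus_interior_strong[of "{}"])
    fix x assume "x \<in> {a<..<b} - {}"
    hence "h x = c" using assms by auto
    thus "((\<lambda>u. c * u) has_vector_derivative h x) (at x)"
      by (auto intro!: derivative_eq_intros simp: has_real_derivative_iff_has_vector_derivative[symmetric])
  qed (use assms in \<open>auto intro!: continuous_intros\<close>)
  thus ?thesis by (simp add: algebra_simps)
qed

lemma piece_tail:
  fixes h :: "real \<Rightarrow> real" and \<alpha> :: real
  assumes "0 < a" "a \<le> b" "\<And>x. x \<in> {a<..<b} \<Longrightarrow> h x = (1 - \<alpha>) * x powr (-\<alpha>)"
  shows "(h has_integral (b powr (1 - \<alpha>) - a powr (1 - \<alpha>))) {a..b}"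
proof (rule fundamental_theorem_of_calculus_interior_strong[of "{}"])
  fix x assume x: "x \<in> {a<..<b} - {}"
  hence hx: "h x = (1 - \<alpha>) * x powr (-\<alpha>)" using assms by auto
  have xp: "x > 0" using x assms by auto
  have "((\<lambda>u. u powr (1 - \<alpha>)) has_real_derivative (1 - \<alpha>) * x powr (1 - \<alpha> - 1)) (at x)"
    using xp by (auto intro!: derivative_eq_intros)
  thus "((\<lambda>u. u powr (1 - \<alpha>)) has_vector_derivative h x) (at x)"
    using hx by (simp add: has_real_derivative_iff_has_vector_derivative[symmetric])
next
  show "continuous_on {a..b} (\<lambda>u. u powr (1 - \<alpha>))"
    using assms by (auto intro!: continuous_intros)
qed (use assms in auto)

definition gg :: "real \<Rightarrow> real \<Rightarrow> real" where
  "gg \<alpha> u = (if u < 1 then 1 else (1 - \<alpha>) * u powr (-\<alpha>))"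
definition ff :: "real \<Rightarrow> real \<Rightarrow> real" where
  "ff \<alpha> u = (if u < 1/4 then 1 else if u < 1 then 1 - \<alpha> else (1 - \<alpha>) * u powr (-\<alpha>))"
definition fc :: "real \<Rightarrow> real \<Rightarrow> real" where
  "fc \<alpha> u = (if 0 < u \<and> u < 1 then ff \<alpha> u else 0)"
definition gc :: "real \<Rightarrow> real" where
  "gc u = (if 0 < u \<and> u < 1 then 1 else 0)"

lemma gg_int:
  assumes "0 < t" "\<alpha> < 1"
  shows "(gg \<alpha> has_integral (if t \<le> 1 then t else t powr (1 - \<alpha>))) {0..t}"
proof (cases "t \<le> 1")
  case True
  have "(gg \<alpha> has_integral 1 * (t - 0)) {0..t}"
    by (rule piece_const) (use True assms in \<open>auto simp: gg_def\<close>)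
  thus ?thesis using True by simp
next
  case False
  have a: "(gg \<alpha> has_integral 1 * (1 - 0)) {0..1}"
    by (rule piece_const) (auto simp: gg_def)
  have b: "(gg \<alpha> has_integral (t powr (1 - \<alpha>) - 1 powr (1 - \<alpha>))) {1..t}"
    by (rule piece_tail) (use False in \<open>auto simp: gg_def\<close>)
  have "(gg \<alpha> has_integral (1 * (1 - 0) + (t powr (1 - \<alpha>) - 1 powr (1 - \<alpha>)))) {0..t}"
    by (rule has_integral_combine[OF _ _ a b]) (use False in auto)
  thus ?thesis using False by simp
qed

lemma ff_int:
  assumes "0 < t" "\<alpha> < 1"
  shows "(ff \<alpha> has_integral (if t \<le> 1/4 then t else if t \<le> 1 then 1/4 + (1 - \<alpha>) * (t - 1/4)
          else t powr (1 - \<alpha>) - 3 * \<alpha> / 4)) {0..t}"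
proof -
  have a: "\<And>t. 0 \<le> t \<Longrightarrow> t \<le> 1/4 \<Longrightarrow> (ff \<alpha> has_integral 1 * (t - 0)) {0..t}"
    by (rule piece_const) (auto simp: ff_def)
  have b: "\<And>t. 1/4 \<le> t \<Longrightarrow> t \<le> 1 \<Longrightarrow> (ff \<alpha> has_integral (1 - \<alpha>) * (t - 1/4)) {1/4..t}"
    by (rule piece_const) (auto simp: ff_def)
  have ab: "\<And>t. 1/4 \<le> t \<Longrightarrow> t \<le> 1 \<Longrightarrow> (ff \<alpha> has_integral (1 * (1/4 - 0) + (1 - \<alpha>) * (t - 1/4))) {0..t}"
    by (rule has_integral_combine[OF _ _ a b]) auto
  show ?thesis
  proof (cases "t \<le> 1")
    case True
    then show ?thesis using a[of t] ab[of t] assms by auto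
  next
    case False
    have c: "(ff \<alpha> has_integral (t powr (1 - \<alpha>) - 1 powr (1 - \<alpha>))) {1..t}"
      by (rule piece_tail) (use False in \<open>auto simp: ff_def\<close>)
    have h: "(ff \<alpha> has_integral ((1 * (1/4 - 0) + (1 - \<alpha>) * (1 - 1/4)) + (t powr (1 - \<alpha>) - 1 powr (1 - \<alpha>)))) {0..t}"
      by (rule has_integral_combine[OF _ _ ab[of 1] c]) (use False in auto)
    have eq: "(1 * (1/4 - 0) + (1 - \<alpha>) * (1 - 1/4)) + (t powr (1 - \<alpha>) - 1 powr (1 - \<alpha>))
       = t powr (1 - \<alpha>) - 3 * \<alpha> / 4" by (simp add: field_simps)
    show ?thesis using h unfolding eq using False by simp
  qed
qed

lemma fc_int:
  assumes "0 < t" "\<alpha> < 1"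
  shows "(fc \<alpha> has_integral (if t \<le> 1/4 then t else if t \<le> 1 then 1/4 + (1 - \<alpha>) * (t - 1/4)
          else 1 - 3 * \<alpha> / 4)) {0..t}"
proof -
  have e: "\<And>t. 0 < t \<Longrightarrow> t \<le> 1 \<Longrightarrow> (fc \<alpha> has_integral integral {0..t} (ff \<alpha>)) {0..t}"
  proof -
    fix t :: real assume t: "0 < t" "t \<le> 1"
    have "(ff \<alpha> has_integral integral {0..t} (ff \<alpha>)) {0<..<t}"
      using ff_int[OF t(1) assms(2)] has_integral_Icc_iff_Ioo integral_unique by blast
    hence "(fc \<alpha> has_integral integral {0..t} (ff \<alpha>)) {0<..<t}"
      by (rule has_integral_eq[rotated]) (use t in \<open>auto simp: fc_def\<close>)
    thus "(fc \<alpha> has_integral integral {0..t} (ff \<alpha>)) {0..t}"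
      using has_integral_Icc_iff_Ioo by blast
  qed
  show ?thesis
  proof (cases "t \<le> 1")
    case True
    have "integral {0..t} (ff \<alpha>) = (if t \<le> 1/4 then t else if t \<le> 1 then 1/4 + (1 - \<alpha>) * (t - 1/4)
          else 1 - 3 * \<alpha> / 4)" using integral_unique[OF ff_int[OF assms]] True by simp
    thus ?thesis using e[OF assms(1) True] by simp
  next
    case False
    have eq1: "integral {0..1} (ff \<alpha>) = 1 - 3 * \<alpha> / 4"
      using integral_unique[OF ff_int[of 1 \<alpha>]] assms by (simp add: field_simps)
    have a: "(fc \<alpha> has_integral (1 - 3 * \<alpha> / 4)) {0..1}"
      using e[of 1] unfolding eq1 by simp
    have b: "(fc \<alpha> has_integral 0 * (t - 1)) {1..t}"
      by (rule piece_const) (use False in \<open>auto simp: fc_def\<close>)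
    have "(fc \<alpha> has_integral ((1 - 3 * \<alpha> / 4) + 0 * (t - 1))) {0..t}"
      by (rule has_integral_combine[OF _ _ a b]) (use False in auto)
    thus ?thesis using False by simp
  qed
qed


lemma tail_rc:
  fixes t c a s :: real
  assumes "0 < t" "s < c * t powr a"
  shows "\<exists>x>t. s < c * x powr a"
proof -
  have "((\<lambda>x. c * x powr a) \<longlongrightarrow> c * t powr a) (at_right t)"
    using assms by (auto intro!: tendsto_eq_intros)
  hence "eventually (\<lambda>x. s < c * x powr a) (at_right t)"
    using assms(2) order_tendstoD(1) by blast
  moreover have "eventually (\<lambda>x. t < x) (at_right t)"
    by (simp add: eventually_at_right_less)
  ultimately have "eventually (\<lambda>x. t < x \<and> s < c * x powr a) (at_right t)"
    by (rule eventually_conj[rotated])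
  then obtain x where "t < x \<and> s < c * x powr a"
    using eventually_happens trivial_limit_at_right_real by blast
  thus ?thesis by blast
qed

lemma tail_le1:
  fixes \<alpha> x :: real
  assumes "0 < \<alpha>" "1 \<le> x"
  shows "x powr (-\<alpha>) \<le> 1"
  using powr_mono2'[of "-\<alpha>" 1 x] assms by simp

lemma ff_meas: "ff \<alpha> \<in> borel_measurable borel"
  unfolding ff_def by measurable
lemma gg_meas: "gg \<alpha> \<in> borel_measurable borel"
  unfolding gg_def by measurable
lemma fc_meas: "fc \<alpha> \<in> borel_measurable borel"
  unfolding fc_def using ff_meas by measurable
lemma gc_meas: "gc \<in> borel_measurable borel"
  unfolding gc_def by measurable

lemma tail_mono:
  fixes \<alpha> x y :: real
  assumes "0 < \<alpha>" "\<alpha> < 1" "0 < x" "x \<le> y"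
  shows "(1 - \<alpha>) * y powr (-\<alpha>) \<le> (1 - \<alpha>) * x powr (-\<alpha>)"
  using assms by (intro mult_left_mono powr_mono2') auto

lemma rearr_ff:
  assumes "0 < \<alpha>" "\<alpha> < 1" "0 < t"
  shows "rearr (ff \<alpha>) t = ennreal (ff \<alpha> t)"
proof (rule rearr_mono_fun[OF ff_meas])
  fix x y :: real assume xy: "0 < x" "x \<le> y"
  show "ff \<alpha> y \<le> ff \<alpha> x"
    using xy assms tail_mono[OF assms(1,2) xy] tail_le1[OF assms(1), of y]
    by (auto simp: ff_def mult_le_cancel_left1 mult_le_one)
next
  fix x :: real assume "0 < x" thus "0 \<le> ff \<alpha> x" using assms by (auto simp: ff_def)
next
  fix s assume s: "s < ff \<alpha> t"
  show "\<exists>x>t. s < ff \<alpha> x"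
  proof (cases "t < 1")
    case True
    show ?thesis
    proof (cases "t < 1/4")
      case True
      thus ?thesis using s by (intro exI[of _ "(t + 1/4)/2"]) (auto simp: ff_def)
    next
      case False
      thus ?thesis using s \<open>t < 1\<close> by (intro exI[of _ "(t + 1)/2"]) (auto simp: ff_def)
    qed
  next
    case False
    hence "s < (1 - \<alpha>) * t powr (-\<alpha>)" using s by (auto simp: ff_def)
    then obtain x where "x > t" "s < (1 - \<alpha>) * x powr (-\<alpha>)" using tail_rc assms by blast
    thus ?thesis using False by (intro exI[of _ x]) (auto simp: ff_def)
  qed
qed (use assms in auto)

lemma rearr_gg:
  assumes "0 < \<alpha>" "\<alpha> < 1" "0 < t"
  shows "rearr (gg \<alpha>) t = ennreal (gg \<alpha> t)"
proof (rule rearr_mono_fun[OF gg_meas])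
  fix x y :: real assume xy: "0 < x" "x \<le> y"
  show "gg \<alpha> y \<le> gg \<alpha> x"
    using xy assms tail_mono[OF assms(1,2) xy] tail_le1[OF assms(1), of y]
    by (auto simp: gg_def mult_le_one)
next
  fix x :: real assume "0 < x" thus "0 \<le> gg \<alpha> x" using assms by (auto simp: gg_def)
next
  fix s assume s: "s < gg \<alpha> t"
  show "\<exists>x>t. s < gg \<alpha> x"
  proof (cases "t < 1")
    case True
    thus ?thesis using s by (intro exI[of _ "(t + 1)/2"]) (auto simp: gg_def)
  next
    case False
    hence "s < (1 - \<alpha>) * t powr (-\<alpha>)" using s by (auto simp: gg_def)
    then obtain x where "x > t" "s < (1 - \<alpha>) * x powr (-\<alpha>)" using tail_rc assms by blast
    thus ?thesis using False by (intro exI[of _ x]) (auto simp: gg_def)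
  qed
qed (use assms in auto)

lemma cut_ff: assumes "0 < \<alpha>" "\<alpha> < 1" shows "rearr_cut (ff \<alpha>) 1 = fc \<alpha>"
  unfolding rearr_cut_def fc_def using rearr_ff[OF assms] assms
  by (auto simp: fun_eq_iff ff_def)

lemma cut_gg: assumes "0 < \<alpha>" "\<alpha> < 1" shows "rearr_cut (gg \<alpha>) 1 = gc"
  unfolding rearr_cut_def gc_def using rearr_gg[OF assms] assms
  by (auto simp: fun_eq_iff gg_def)

lemma rearr_fc:
  assumes "0 < \<alpha>" "\<alpha> < 1" "0 < t"
  shows "rearr (fc \<alpha>) t = ennreal (fc \<alpha> t)"
proof (rule rearr_mono_fun[OF fc_meas])
  fix x y :: real assume xy: "0 < x" "x \<le> y"
  show "fc \<alpha> y \<le> fc \<alpha> x"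
    using xy assms by (auto simp: fc_def ff_def)
next
  fix x :: real assume "0 < x" thus "0 \<le> fc \<alpha> x" using assms by (auto simp: fc_def ff_def)
next
  fix s assume s: "s < fc \<alpha> t"
  show "\<exists>x>t. s < fc \<alpha> x"
  proof (cases "t < 1")
    case False thus ?thesis using s by (intro exI[of _ "t + 1"]) (auto simp: fc_def)
  next
  case t1: True
  show ?thesis
  proof (cases "t < 1/4")
    case True
    thus ?thesis using s assms by (intro exI[of _ "(t + 1/4)/2"]) (auto simp: fc_def ff_def)
  next
    case False
    thus ?thesis using s t1 assms by (intro exI[of _ "(t + 1)/2"]) (auto simp: fc_def ff_def)
  qed
  qed
qed (use assms in auto)

lemma rearr_gc:
  assumes "0 < t"
  shows "rearr gc t = ennreal (gc t)"
proof (rule rearr_mono_fun[OF gc_meas])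
  fix x y :: real assume xy: "0 < x" "x \<le> y"
  show "gc y \<le> gc x" using xy by (auto simp: gc_def)
next
  fix s assume s: "s < gc t"
  show "\<exists>x>t. s < gc x"
  proof (cases "t < 1")
    case True thus ?thesis using s assms by (intro exI[of _ "(t + 1)/2"]) (auto simp: gc_def)
  next
    case False thus ?thesis using s by (intro exI[of _ "t + 1"]) (auto simp: gc_def)
  qed
qed (use assms in \<open>auto simp: gc_def\<close>)


lemma set_int_rearr:
  fixes h :: "real \<Rightarrow> real"
  assumes r: "\<And>u. 0 < u \<Longrightarrow> rearr h u = ennreal (h u)"
    and nn: "\<And>u. 0 < u \<Longrightarrow> 0 \<le> h u"
    and I: "(h has_integral I) {0..t}"
  shows "(\<integral>\<^sup>+ u\<in>{0<..<t}. rearr h u \<partial>lborel) = ennreal I"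
proof -
  have "(\<integral>\<^sup>+ u\<in>{0<..<t}. rearr h u \<partial>lborel) = (\<integral>\<^sup>+ u. ennreal (h u) * indicator {0<..<t} u \<partial>lborel)"
    by (intro nn_integral_cong) (auto simp: r indicator_def)
  also have "\<dots> = ennreal I"
  proof (rule nn_integral_has_integral_lebesgue')
    show "(h has_integral I) {0<..<t}" using I has_integral_Icc_iff_Ioo by blast
  qed (use nn in auto)
  finally show ?thesis .
qed

lemma powr_le1: "0 < t \<Longrightarrow> t \<le> 1 \<Longrightarrow> 0 \<le> a \<Longrightarrow> t powr a \<le> (1::real)"
  using powr_mono2[of a t 1] by simp

lemma phi_eq: "0 < t \<Longrightarrow> 0 \<le> I \<Longrightarrow> ennreal (t powr (\<alpha> - 1)) * ennreal I = ennreal (t powr (\<alpha> - 1) * I)"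
  by (simp add: ennreal_mult')

lemma gg_norm:
  assumes a: "0 < \<alpha>" "\<alpha> < 1"
  shows "marc_norm \<alpha> (gg \<alpha>) \<le> 1"
  unfolding marc_norm_def
proof (rule SUP_least)
  fix t :: real assume "t \<in> {0<..}"
  hence t: "0 < t" by simp
  define I where "I = (if t \<le> 1 then t else t powr (1 - \<alpha>))"
  have "(\<integral>\<^sup>+ u\<in>{0<..<t}. rearr (gg \<alpha>) u \<partial>lborel) = ennreal I"
    unfolding I_def
    by (rule set_int_rearr[OF rearr_gg[OF a] _ gg_int[OF t a(2)]]) (use a in \<open>auto simp: gg_def\<close>)
  moreover have "0 \<le> I" using t by (simp add: I_def)
  moreover have "t powr (\<alpha> - 1) * I \<le> 1"
  proof (cases "t \<le> 1")
    case True
    have "t powr (\<alpha> - 1) * t = t powr \<alpha>" using powr_add[of t "\<alpha> - 1" 1] t by simp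
    thus ?thesis using True t a by (simp add: I_def powr_le1)
  next
    case False
    have "t powr (\<alpha> - 1) * t powr (1 - \<alpha>) = 1" using t by (simp add: powr_add[symmetric])
    thus ?thesis using False by (simp add: I_def)
  qed
  ultimately show "ennreal (t powr (\<alpha> - 1)) * (\<integral>\<^sup>+ u\<in>{0<..<t}. rearr (gg \<alpha>) u \<partial>lborel) \<le> 1"
    using t by (simp add: phi_eq ennreal_le_1)
qed


lemma ff_set_int:
  assumes a: "0 < \<alpha>" "\<alpha> < 1" and t: "0 < t"
  shows "(\<integral>\<^sup>+ u\<in>{0<..<t}. rearr (ff \<alpha>) u \<partial>lborel) = ennreal (if t \<le> 1/4 then t else if t \<le> 1 then 1/4 + (1 - \<alpha>) * (t - 1/4)
          else t powr (1 - \<alpha>) - 3 * \<alpha> / 4)"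
  by (rule set_int_rearr[OF rearr_ff[OF a] _ ff_int[OF t a(2)]]) (use a in \<open>auto simp: ff_def\<close>)

lemma fc_set_int:
  assumes a: "0 < \<alpha>" "\<alpha> < 1" and t: "0 < t"
  shows "(\<integral>\<^sup>+ u\<in>{0<..<t}. rearr (fc \<alpha>) u \<partial>lborel) = ennreal (if t \<le> 1/4 then t else if t \<le> 1 then 1/4 + (1 - \<alpha>) * (t - 1/4)
          else 1 - 3 * \<alpha> / 4)"
  by (rule set_int_rearr[OF rearr_fc[OF a] _ fc_int[OF t a(2)]]) (use a in \<open>auto simp: fc_def ff_def\<close>)

lemma gc_set_int1:
  "(\<integral>\<^sup>+ u\<in>{0<..<1}. rearr gc u \<partial>lborel) = ennreal 1"
proof (rule set_int_rearr[OF rearr_gc])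
  have "(gc has_integral 1 * (1 - 0)) {0..1}" by (rule piece_const) (auto simp: gc_def)
  thus "(gc has_integral 1) {0..1}" by simp
qed (auto simp: gc_def)

lemma ff_norm_le:
  assumes a: "0 < \<alpha>" "\<alpha> < 1"
  shows "marc_norm \<alpha> (ff \<alpha>) \<le> 1"
  unfolding marc_norm_def
proof (rule SUP_least)
  fix t :: real assume "t \<in> {0<..}"
  hence t: "0 < t" by simp
  define I where "I = (if t \<le> 1/4 then t else if t \<le> 1 then 1/4 + (1 - \<alpha>) * (t - 1/4)
          else t powr (1 - \<alpha>) - 3 * \<alpha> / 4)"
  have p1: "1 \<le> t powr (1 - \<alpha>)" if "1 < t" using that a by (simp add: ge_one_powr_ge_zero)
  have "0 \<le> I" using t a p1 by (auto simp: I_def)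
  moreover have "t powr (\<alpha> - 1) * I \<le> 1"
  proof (cases "t \<le> 1")
    case True
    have "I \<le> t"
    proof (cases "t \<le> 1/4")
      case False
      have "(1 - \<alpha>) * (t - 1/4) \<le> t - 1/4"
        using mult_right_mono[of "1 - \<alpha>" 1 "t - 1/4"] a False by simp
      moreover have "I = 1/4 + (1 - \<alpha>) * (t - 1/4)" using False \<open>t \<le> 1\<close> by (simp add: I_def)
      ultimately show ?thesis by linarith
    qed (simp add: I_def)
    hence "t powr (\<alpha> - 1) * I \<le> t powr (\<alpha> - 1) * t" by (intro mult_left_mono) auto
    also have "t powr (\<alpha> - 1) * t = t powr \<alpha>" using powr_add[of t "\<alpha> - 1" 1] t by simp
    also have "\<dots> \<le> 1" using True t a by (simp add: powr_le1)
    finally show ?thesis .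
  next
    case False
    have "t powr (\<alpha> - 1) * t powr (1 - \<alpha>) = 1" using t by (simp add: powr_add[symmetric])
    hence "t powr (\<alpha> - 1) * I = 1 - 3 * \<alpha> / 4 * t powr (\<alpha> - 1)" using False
      by (simp add: I_def algebra_simps)
    also have "\<dots> \<le> 1" using a by simp
    finally show ?thesis .
  qed
  ultimately show "ennreal (t powr (\<alpha> - 1)) * (\<integral>\<^sup>+ u\<in>{0<..<t}. rearr (ff \<alpha>) u \<partial>lborel) \<le> 1"
    using t unfolding ff_set_int[OF a t] I_def[symmetric] by (simp add: phi_eq ennreal_le_1)
qed

lemma ff_norm_ge:
  assumes a: "0 < \<alpha>" "\<alpha> < 1"
  shows "1 \<le> marc_norm \<alpha> (ff \<alpha>)"
proof -
  define X where "X n = 1 - 3 * \<alpha> / 4 * (real n + 2) powr (\<alpha> - 1)" for n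
  have lim: "X \<longlonglongrightarrow> 1"
  proof -
    have "filterlim (\<lambda>n. real n + 2) at_top sequentially"
      using filterlim_tendsto_add_at_top[OF tendsto_const[of "2::real"] filterlim_real_sequentially]
      by (simp add: add.commute)
    hence "(\<lambda>n. (real n + 2) powr (\<alpha> - 1)) \<longlonglongrightarrow> 0"
      using a by (intro tendsto_neg_powr) auto
    hence "X \<longlonglongrightarrow> 1 - 3 * \<alpha> / 4 * 0" unfolding X_def by (intro tendsto_intros)
    thus ?thesis by simp
  qed
  hence lim': "(\<lambda>n. ennreal (X n)) \<longlonglongrightarrow> ennreal 1" by (rule tendsto_ennrealI)
  have "ennreal (X n) \<le> marc_norm \<alpha> (ff \<alpha>)" for n
  proof -
    define t where "t = real n + 2"
    have t: "0 < t" "\<not> t \<le> 1" "\<not> t \<le> 1/4" by (auto simp: t_def)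
    have p1: "1 \<le> t powr (1 - \<alpha>)" using t a by (simp add: ge_one_powr_ge_zero)
    have "t powr (\<alpha> - 1) * t powr (1 - \<alpha>) = 1" using t by (simp add: powr_add[symmetric])
    hence eq: "t powr (\<alpha> - 1) * (t powr (1 - \<alpha>) - 3 * \<alpha> / 4) = X n"
      by (simp add: X_def t_def[symmetric] algebra_simps)
    have "ennreal (X n) = ennreal (t powr (\<alpha> - 1)) * (\<integral>\<^sup>+ u\<in>{0<..<t}. rearr (ff \<alpha>) u \<partial>lborel)"
      unfolding ff_set_int[OF a t(1)] using t p1 a by (simp add: phi_eq eq)
    also have "\<dots> \<le> marc_norm \<alpha> (ff \<alpha>)" unfolding marc_norm_def
      by (rule SUP_upper) (use t in auto)
    finally show ?thesis .
  qed
  thus ?thesis using LIMSEQ_le_const2[OF lim'] by auto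
qed

lemma gc_norm_ge:
  assumes a: "0 < \<alpha>" "\<alpha> < 1"
  shows "1 \<le> marc_norm \<alpha> gc"
proof -
  have "1 = ennreal ((1::real) powr (\<alpha> - 1)) * (\<integral>\<^sup>+ u\<in>{0<..<1}. rearr gc u \<partial>lborel)"
    unfolding gc_set_int1 by simp
  also have "\<dots> \<le> marc_norm \<alpha> gc" unfolding marc_norm_def
    by (rule SUP_upper) auto
  finally show ?thesis .
qed


lemma fc_norm_lt:
  assumes a: "0 < \<alpha>" "\<alpha> < 1"
  shows "marc_norm \<alpha> (fc \<alpha>) < 1"
proof -
  define b where "b = max ((1/2) powr \<alpha>) (1 - \<alpha>/2)"
  have b1: "b < 1"
  proof -
    have "(1/2::real) powr \<alpha> < 1 powr \<alpha>" by (rule powr_less_mono2) (use a in auto)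
    thus ?thesis using a by (simp add: b_def)
  qed
  have "marc_norm \<alpha> (fc \<alpha>) \<le> ennreal b"
    unfolding marc_norm_def
  proof (rule SUP_least)
    fix t :: real assume "t \<in> {0<..}"
    hence t: "0 < t" by simp
    define I where "I = (if t \<le> 1/4 then t else if t \<le> 1 then 1/4 + (1 - \<alpha>) * (t - 1/4)
            else 1 - 3 * \<alpha> / 4)"
    have "0 \<le> I" using t a by (auto simp: I_def)
    moreover have "t powr (\<alpha> - 1) * I \<le> b"
    proof -
      have tt: "t powr (\<alpha> - 1) * t = t powr \<alpha>" using powr_add[of t "\<alpha> - 1" 1] t by simp
      consider "t \<le> 1/2" | "1/2 < t" "t \<le> 1" | "1 < t" by linarith
      thus ?thesis
      proof cases
        case 1
        have "I \<le> t"
        proof (cases "t \<le> 1/4")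
          case False
          have "(1 - \<alpha>) * (t - 1/4) \<le> t - 1/4"
            using mult_right_mono[of "1 - \<alpha>" 1 "t - 1/4"] a False by simp
          moreover have "I = 1/4 + (1 - \<alpha>) * (t - 1/4)" using False 1 by (simp add: I_def)
          ultimately show ?thesis by linarith
        qed (simp add: I_def)
        hence "t powr (\<alpha> - 1) * I \<le> t powr (\<alpha> - 1) * t" by (intro mult_left_mono) auto
        also have "\<dots> = t powr \<alpha>" by (rule tt)
        also have "\<dots> \<le> (1/2) powr \<alpha>" by (rule powr_mono2) (use a t 1 in auto)
        also have "\<dots> \<le> b" by (simp add: b_def)
        finally show ?thesis .
      next
        case 2
        have I: "I = \<alpha>/4 + (1 - \<alpha>) * t" using 2 by (simp add: I_def field_simps)
        have ta: "t powr \<alpha> \<le> 1" using 2 t a by (simp add: powr_le1)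
        have "t powr (\<alpha> - 1) = t powr \<alpha> / t" using t by (simp add: powr_diff)
        also have "\<dots> \<le> 1 / t" using ta t by (simp add: divide_right_mono)
        also have "\<dots> \<le> 2" using 2 by (simp add: field_simps)
        finally have t2: "t powr (\<alpha> - 1) \<le> 2" .
        have "t powr (\<alpha> - 1) * I = \<alpha>/4 * t powr (\<alpha> - 1) + (1 - \<alpha>) * (t powr (\<alpha> - 1) * t)"
          unfolding I by (simp add: algebra_simps)
        also have "\<dots> = \<alpha>/4 * t powr (\<alpha> - 1) + (1 - \<alpha>) * t powr \<alpha>" by (simp add: tt)
        also have "\<dots> \<le> \<alpha>/4 * 2 + (1 - \<alpha>) * 1"
          by (intro add_mono mult_left_mono t2 ta) (use a in auto)
        also have "\<dots> = 1 - \<alpha>/2" by simp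
        also have "\<dots> \<le> b" by (simp add: b_def)
        finally show ?thesis .
      next
        case 3
        have tl: "t powr (\<alpha> - 1) \<le> 1" using powr_mono2'[of "\<alpha> - 1" 1 t] 3 a by simp
        have I: "I = 1 - 3 * \<alpha> / 4" using 3 by (simp add: I_def)
        have "t powr (\<alpha> - 1) * I \<le> 1 * I" by (rule mult_right_mono) (use tl I a in auto)
        also have "\<dots> \<le> b" using I a by (simp add: b_def)
        finally show ?thesis .
      qed
    qed
    ultimately show "ennreal (t powr (\<alpha> - 1)) * (\<integral>\<^sup>+ u\<in>{0<..<t}. rearr (fc \<alpha>) u \<partial>lborel) \<le> ennreal b"
      using t unfolding fc_set_int[OF a t] I_def[symmetric] by (simp add: phi_eq ennreal_leI)
  qed
  also have "ennreal b < 1" using b1 by (simp add: ennreal_less_iff)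
  finally show ?thesis .
qed


theorem mainTheorem16:
  fixes \<alpha> :: real
  assumes "0 < \<alpha>" and "\<alpha> < 1"
  shows "\<not> classX_prop (marc_space \<alpha>) (marc_norm \<alpha>)"
proof
  assume X: "classX_prop (marc_space \<alpha>) (marc_norm \<alpha>)"
  note a = assms
  have "marc_norm \<alpha> (ff \<alpha>) < \<infinity>"
    using ff_norm_le[OF a] by (rule order_le_less_trans) simp
  have fX: "ff \<alpha> \<in> marc_space \<alpha>"
    unfolding marc_space_def using ff_meas \<open>marc_norm \<alpha> (ff \<alpha>) < \<infinity>\<close>
    by (simp add: measurable_lborel1)
  have "marc_norm \<alpha> (gg \<alpha>) < \<infinity>"
    using gg_norm[OF a] by (rule order_le_less_trans) simp
  have gX: "gg \<alpha> \<in> marc_space \<alpha>"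
    unfolding marc_space_def using gg_meas \<open>marc_norm \<alpha> (gg \<alpha>) < \<infinity>\<close>
    by (simp add: measurable_lborel1)
  have NP: "NP_cond (ff \<alpha>) (gg \<alpha>)"
    unfolding NP_cond_def
  proof (intro exI[of _ "1/8"] conjI allI impI)
    fix t :: real assume t: "0 < t \<and> t \<le> 1/8"
    thus "rearr (gg \<alpha>) t \<le> rearr (ff \<alpha>) t"
      using a by (simp add: rearr_ff rearr_gg) (simp add: ff_def gg_def)
  next
    fix t :: real assume t: "1/8 \<le> t"
    have "ff \<alpha> t \<le> gg \<alpha> t" using a by (auto simp: ff_def gg_def)
    thus "rearr (ff \<alpha>) t \<le> rearr (gg \<alpha>) t"
      using a t by (simp add: rearr_ff rearr_gg ennreal_leI)
  qed simp
  have nrm: "marc_norm \<alpha> (gg \<alpha>) \<le> marc_norm \<alpha> (ff \<alpha>)"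
    using gg_norm[OF a] ff_norm_ge[OF a] by (rule order_trans)
  have "marc_norm \<alpha> (rearr_cut (gg \<alpha>) 1) \<le> marc_norm \<alpha> (rearr_cut (ff \<alpha>) 1)"
    using X[unfolded classX_prop_def, rule_format, of "ff \<alpha>" "gg \<alpha>" 1] fX gX NP nrm by simp
  hence "marc_norm \<alpha> gc \<le> marc_norm \<alpha> (fc \<alpha>)" by (simp add: cut_ff[OF a] cut_gg[OF a])
  thus False using gc_norm_ge[OF a] fc_norm_lt[OF a] by simp
qed

end
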